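(* Let $f:\{0,1\}^n\to\{0,1\}$ be an arbitrary symmetric Boolean function and let $\operatorname{alt}(f)$ be its alternation number. Then $\mathsf N(f)\ge\frac{\operatorname{alt}(f)}{2}$.
   Context: $\mathsf N(f)$ is the minimum degree of a real polynomial $p$ with $|p(x)|\le1/3$ whenever $f(x)=0$ and $|p(x)|\ge1$ whenever $f(x)=1$. $f$ is symmetric if its value depends only on the Hamming weight of the input. A monotone path is a sequence in $\{0,1\}^n$ where each next point is obtained by changing one coordinate from $0$ to $1$; its alternation number is the number of consecutive pairs on which $f$ changes value; $\operatorname{alt}(f)$ is the maximum alternation number over monotone paths from $0^n$ to $1^n$. *)

theory Defs
  imports Complex_Main
begin

text \<open>Points of the Boolean cube {0,1}^n are bool lists of length n (True = 1).\<close>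

definition cube_pt :: "bool list \<Rightarrow> nat \<Rightarrow> real" where
  "cube_pt x i = (if x ! i then 1 else 0)"

definition poly_deg_le :: "nat \<Rightarrow> nat \<Rightarrow> ((nat \<Rightarrow> real) \<Rightarrow> real) \<Rightarrow> bool" where
  "poly_deg_le n d p \<longleftrightarrow>
     (\<exists>M :: (nat \<Rightarrow> nat) set. \<exists>c :: (nat \<Rightarrow> nat) \<Rightarrow> real.
        finite M \<and> (\<forall>e\<in>M. (\<Sum>i<n. e i) \<le> d) \<and>
        (\<forall>y. p y = (\<Sum>e\<in>M. c e * (\<Prod>i<n. y i ^ e i))))"

definition symmetric_fun :: "nat \<Rightarrow> (bool list \<Rightarrow> bool) \<Rightarrow> bool" where
  "symmetric_fun n f \<longleftrightarrow>
     (\<forall>x y. length x = n \<longrightarrow> length y = n \<longrightarrow> count_list x True = count_list y True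
        \<longrightarrow> f x = f y)"

definition N_deg :: "nat \<Rightarrow> (bool list \<Rightarrow> bool) \<Rightarrow> nat" where
  "N_deg n f = (LEAST d. \<exists>p. poly_deg_le n d p \<and>
      (\<forall>x. length x = n \<longrightarrow>
         (\<not> f x \<longrightarrow> \<bar>p (cube_pt x)\<bar> \<le> 1/3) \<and> (f x \<longrightarrow> \<bar>p (cube_pt x)\<bar> \<ge> 1)))"

definition monotone_path :: "nat \<Rightarrow> (nat \<Rightarrow> bool list) \<Rightarrow> bool" where
  "monotone_path n P \<longleftrightarrow>
     P 0 = replicate n False \<and> P n = replicate n True \<and>
     (\<forall>k<n. \<exists>j<n. \<not> (P k ! j) \<and> P (Suc k) = (P k)[j := True])"

definition alt_num :: "(bool list \<Rightarrow> bool) \<Rightarrow> nat \<Rightarrow> (nat \<Rightarrow> bool list) \<Rightarrow> nat" where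
  "alt_num f n P = card {k. k < n \<and> f (P k) \<noteq> f (P (Suc k))}"

definition alt :: "nat \<Rightarrow> (bool list \<Rightarrow> bool) \<Rightarrow> nat" where
  "alt n f = Max {alt_num f n P | P. monotone_path n P}"

end

theory Submission
  imports Defs "HOL-Computational_Algebra.Polynomial"
begin


lemma pdl_mono: "poly_deg_le n a p \<Longrightarrow> a \<le> b \<Longrightarrow> poly_deg_le n b p"
  unfolding poly_deg_le_def by (meson order_trans)

lemma pdl_const: "poly_deg_le n d (\<lambda>y. c)"
  unfolding poly_deg_le_def
  by (rule exI[of _ "{\<lambda>i. 0}"], rule exI[of _ "\<lambda>_. c"]) simp

lemma pdl_var: assumes "i < n" shows "poly_deg_le n 1 (\<lambda>y. y i)"
  unfolding poly_deg_le_def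
proof (rule exI[of _ "{\<lambda>j. if j = i then 1 else 0}"], rule exI[of _ "\<lambda>_. 1"], intro conjI allI ballI)
  fix y :: "nat \<Rightarrow> real"
  have "(\<Prod>j<n. y j ^ (if j = i then 1 else 0)) = (\<Prod>j<n. if j = i then y j else 1)"
    by (rule prod.cong) auto
  also have "\<dots> = y i" using assms by (simp add: prod.delta)
  finally show "y i = (\<Sum>e\<in>{\<lambda>j. if j = i then 1 else 0}. 1 * (\<Prod>j<n. y j ^ e j))" by simp
qed (use assms in \<open>auto simp: sum.delta\<close>)

lemma pdl_add:
  assumes "poly_deg_le n a p" "poly_deg_le n a q"
  shows "poly_deg_le n a (\<lambda>y. p y + q y)"
proof -
  obtain M1 c1 where 1: "finite M1" "\<forall>e\<in>M1. (\<Sum>i<n. e i) \<le> a"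
    "\<forall>y. p y = (\<Sum>e\<in>M1. c1 e * (\<Prod>i<n. y i ^ e i))"
    using assms(1) unfolding poly_deg_le_def by blast
  obtain M2 c2 where 2: "finite M2" "\<forall>e\<in>M2. (\<Sum>i<n. e i) \<le> a"
    "\<forall>y. q y = (\<Sum>e\<in>M2. c2 e * (\<Prod>i<n. y i ^ e i))"
    using assms(2) unfolding poly_deg_le_def by blast
  define c where "c e = (if e \<in> M1 then c1 e else 0) + (if e \<in> M2 then c2 e else 0)" for e
  show ?thesis unfolding poly_deg_le_def
  proof (rule exI[of _ "M1 \<union> M2"], rule exI[of _ c], intro conjI allI)
    fix y :: "nat \<Rightarrow> real"
    let ?m = "\<lambda>e. (\<Prod>i<n. y i ^ e i)"
    have "(\<Sum>e\<in>M1 \<union> M2. c e * ?m e) = (\<Sum>e\<in>M1 \<union> M2. (if e \<in> M1 then c1 e * ?m e else 0))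
       + (\<Sum>e\<in>M1 \<union> M2. (if e \<in> M2 then c2 e * ?m e else 0))"
      unfolding sum.distrib[symmetric] by (rule sum.cong) (auto simp: c_def algebra_simps)
    also have "\<dots> = (\<Sum>e\<in>M1. c1 e * ?m e) + (\<Sum>e\<in>M2. c2 e * ?m e)"
      using 1(1) 2(1) by (simp add: sum.inter_restrict[symmetric] Int_absorb1 Int_absorb2)
    finally show "p y + q y = (\<Sum>e\<in>M1 \<union> M2. c e * ?m e)" using 1(3) 2(3) by simp
  qed (use 1 2 in auto)
qed

lemma pdl_mult:
  assumes "poly_deg_le n a p" "poly_deg_le n b q"
  shows "poly_deg_le n (a + b) (\<lambda>y. p y * q y)"
proof -
  obtain M1 c1 where 1: "finite M1" "\<forall>e\<in>M1. (\<Sum>i<n. e i) \<le> a"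
    "\<forall>y. p y = (\<Sum>e\<in>M1. c1 e * (\<Prod>i<n. y i ^ e i))"
    using assms(1) unfolding poly_deg_le_def by blast
  obtain M2 c2 where 2: "finite M2" "\<forall>e\<in>M2. (\<Sum>i<n. e i) \<le> b"
    "\<forall>y. q y = (\<Sum>e\<in>M2. c2 e * (\<Prod>i<n. y i ^ e i))"
    using assms(2) unfolding poly_deg_le_def by blast
  define g where "g = (\<lambda>(u::nat\<Rightarrow>nat, v::nat\<Rightarrow>nat). (\<lambda>i. u i + v i))"
  define M where "M = g ` (M1 \<times> M2)"
  define c where "c e = (\<Sum>uv\<in>{uv \<in> M1 \<times> M2. g uv = e}. c1 (fst uv) * c2 (snd uv))" for e
  show ?thesis unfolding poly_deg_le_def
  proof (rule exI[of _ M], rule exI[of _ c], intro conjI allI ballI)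
    show "finite M" unfolding M_def using 1(1) 2(1) by simp
  next
    fix e assume "e \<in> M"
    then obtain u v where uv: "u \<in> M1" "v \<in> M2" "e = g (u, v)" unfolding M_def by auto
    have "(\<Sum>i<n. e i) = (\<Sum>i<n. u i) + (\<Sum>i<n. v i)" unfolding uv g_def by (simp add: sum.distrib)
    then show "(\<Sum>i<n. e i) \<le> a + b" using 1(2) 2(2) uv by fastforce
  next
    fix y :: "nat \<Rightarrow> real"
    let ?m = "\<lambda>e. (\<Prod>i<n. y i ^ e i)"
    have mg: "?m (g uv) = ?m (fst uv) * ?m (snd uv)" for uv
      unfolding g_def by (cases uv) (simp add: power_add prod.distrib)
    have "p y * q y = (\<Sum>u\<in>M1. \<Sum>v\<in>M2. (c1 u * ?m u) * (c2 v * ?m v))"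
      using 1(3) 2(3) by (simp add: sum_product)
    also have "\<dots> = (\<Sum>uv\<in>M1 \<times> M2. c1 (fst uv) * c2 (snd uv) * ?m (g uv))"
      by (simp add: sum.cartesian_product mg algebra_simps case_prod_beta)
    also have "\<dots> = (\<Sum>e\<in>M. \<Sum>uv\<in>{uv \<in> M1 \<times> M2. g uv = e}. c1 (fst uv) * c2 (snd uv) * ?m (g uv))"
      unfolding M_def using 1(1) 2(1) by (intro sum.group[symmetric]) auto
    also have "\<dots> = (\<Sum>e\<in>M. c e * ?m e)"
      unfolding c_def sum_distrib_right by (rule sum.cong) auto
    finally show "p y * q y = (\<Sum>e\<in>M. c e * ?m e)" .
  qed
qed

lemma pdl_prod:
  assumes "finite I" "\<And>i. i \<in> I \<Longrightarrow> poly_deg_le n (a i) (g i)"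
  shows "poly_deg_le n (\<Sum>i\<in>I. a i) (\<lambda>y. \<Prod>i\<in>I. g i y)"
  using assms
proof (induction I rule: finite_induct)
  case empty then show ?case by (simp add: pdl_const)
next
  case (insert x F)
  then show ?case using pdl_mult[of n "a x" "g x" "sum a F" "\<lambda>y. \<Prod>i\<in>F. g i y"] by simp
qed

lemma pdl_sum:
  assumes "finite I" "\<And>i. i \<in> I \<Longrightarrow> poly_deg_le n d (g i)"
  shows "poly_deg_le n d (\<lambda>y. \<Sum>i\<in>I. g i y)"
  using assms
proof (induction I rule: finite_induct)
  case empty then show ?case by (simp add: pdl_const)
next
  case (insert x F)
  then show ?case using pdl_add[of n d "g x" "\<lambda>y. \<Sum>i\<in>F. g i y"] by simp
qed


lemma exists_poly:
  "\<exists>p. poly_deg_le n n p \<and> (\<forall>x. length x = n \<longrightarrow> p (cube_pt x) = (if f x then 1 else 0))"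
proof -
  define C where "C = {x :: bool list. length x = n \<and> f x}"
  have fC: "finite C"
  proof -
    have "finite {xs :: bool list. set xs \<subseteq> UNIV \<and> length xs = n}"
      by (rule finite_lists_length_eq) simp
    then show ?thesis unfolding C_def by (rule rev_finite_subset) auto
  qed
  define g where "g x i y = (if x ! i then y i else 1 - y i)" for x :: "bool list" and i and y :: "nat \<Rightarrow> real"
  define p where "p y = (\<Sum>x\<in>C. \<Prod>i<n. g x i y)" for y
  have gdeg: "poly_deg_le n 1 (g x i)" if "i < n" for x i
  proof (cases "x ! i")
    case True then show ?thesis unfolding g_def using pdl_var[OF that] by simp
  next
    case False
    have "poly_deg_le n 1 (\<lambda>y. 1 + (-1) * y i)"
      using pdl_add[OF pdl_const pdl_mult[OF pdl_const[of n 0 "-1"] pdl_var[OF that]]] by simp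
    then show ?thesis unfolding g_def using False by simp
  qed
  have "poly_deg_le n (\<Sum>i<n. 1) (\<lambda>y. \<Prod>i<n. g x i y)" for x
    by (rule pdl_prod) (use gdeg in auto)
  then have "poly_deg_le n n p" unfolding p_def by (intro pdl_sum[OF fC]) simp
  moreover have "p (cube_pt z) = (if f z then 1 else 0)" if "length z = n" for z
  proof -
    have pr: "(\<Prod>i<n. g x i (cube_pt z)) = (if x = z then 1 else 0)" if "x \<in> C" for x
    proof (cases "x = z")
      case True
      have "g x i (cube_pt z) = 1" for i
        unfolding g_def cube_pt_def using True by simp
      then show ?thesis using True by simp
    next
      case False
      have lx: "length x = n" using \<open>x \<in> C\<close> unfolding C_def by simp
      have "\<exists>i<n. x ! i \<noteq> z ! i"
      proof (rule ccontr)
        assume "\<not> ?thesis"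
        then have "x = z" using lx \<open>length z = n\<close> by (intro nth_equalityI) auto
        then show False using False by simp
      qed
      then obtain i where "i < n" "x ! i \<noteq> z ! i" by blast
      then have "g x i (cube_pt z) = 0" by (auto simp: g_def cube_pt_def)
      then show ?thesis using False \<open>i < n\<close> by (auto intro: prod_zero)
    qed
    have "p (cube_pt z) = (\<Sum>x\<in>C. if x = z then 1 else 0)"
      unfolding p_def by (rule sum.cong) (auto simp: pr)
    also have "\<dots> = (if f z then 1 else 0)" using fC \<open>length z = n\<close> by (simp add: sum.delta' C_def)
    finally show ?thesis .
  qed
  ultimately show ?thesis by blast
qed


definition ptT :: "nat set \<Rightarrow> nat \<Rightarrow> bool list" where
  "ptT T n = map (\<lambda>i. i \<in> T) [0..<n]"

lemma count_card: "count_list x True = card {i. i < length x \<and> x ! i}"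
  by (simp add: count_list_eq_length_filter length_filter_conv_card)

lemma ptT_len[simp]: "length (ptT T n) = n" by (simp add: ptT_def)
lemma ptT_nth[simp]: "i < n \<Longrightarrow> ptT T n ! i = (i \<in> T)" by (simp add: ptT_def)

lemma ptT_count: "T \<subseteq> {..<n} \<Longrightarrow> count_list (ptT T n) True = card T"
  unfolding count_card by (rule arg_cong[where f=card]) auto

lemma sym_F:
  assumes "symmetric_fun n f" "length x = n"
  shows "f x = f (ptT {..<count_list x True} n)"
proof -
  have "count_list x True \<le> n" using assms(2) by (metis count_le_length)
  then show ?thesis using assms unfolding symmetric_fun_def
    by (metis lessThan_subset_iff ptT_count ptT_len card_lessThan)
qed

lemma path_count:
  assumes "monotone_path n P" "k \<le> n"
  shows "length (P k) = n \<and> count_list (P k) True = k"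
  using assms(2)
proof (induction k)
  case 0 then show ?case using assms(1) unfolding monotone_path_def by (simp add: count_list_0_iff)
next
  case (Suc k)
  then have IH: "length (P k) = n" "count_list (P k) True = k" by auto
  obtain j where j: "j < n" "\<not> P k ! j" "P (Suc k) = (P k)[j := True]"
    using assms(1) Suc.prems unfolding monotone_path_def by (meson Suc_le_lessD)
  have "{i. i < n \<and> P (Suc k) ! i} = insert j {i. i < n \<and> P k ! i}"
    using j IH by (auto simp: nth_list_update)
  then have "card {i. i < n \<and> P (Suc k) ! i} = Suc (card {i. i < n \<and> P k ! i})"
    using j by simp
  then show ?case using IH j by (simp add: count_card)
qed

lemma alt_eq:
  assumes "symmetric_fun n f"
  shows "alt n f = card {k. k < n \<and> f (ptT {..<k} n) \<noteq> f (ptT {..<Suc k} n)}"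
proof -
  let ?F = "\<lambda>k. f (ptT {..<k} n)"
  let ?A = "{k. k < n \<and> ?F k \<noteq> ?F (Suc k)}"
  have an: "alt_num f n P = card ?A" if "monotone_path n P" for P
  proof -
    have "f (P k) = ?F k" if "k \<le> n" for k
      using path_count[OF \<open>monotone_path n P\<close> that] sym_F[OF assms] by metis
    then show ?thesis unfolding alt_num_def by (intro arg_cong[where f=card]) auto
  qed
  define P0 where "P0 k = ptT {..<k} n" for k
  have "monotone_path n P0"
    unfolding monotone_path_def
  proof (intro conjI allI impI)
    show "P0 0 = replicate n False" by (intro nth_equalityI) (auto simp: P0_def)
    show "P0 n = replicate n True" by (intro nth_equalityI) (auto simp: P0_def)
    fix k assume "k < n"
    then show "\<exists>j<n. \<not> P0 k ! j \<and> P0 (Suc k) = (P0 k)[j := True]"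
      by (intro exI[of _ k]) (auto simp: P0_def nth_list_update split: if_splits intro!: nth_equalityI)
  qed
  then have "{alt_num f n P | P. monotone_path n P} = {card ?A}" using an by (auto intro!: exI[of _ P0])
  then show ?thesis unfolding alt_def by simp
qed


lemma count_super:
  assumes "S \<subseteq> {..<n}" "card S \<le> k"
  shows "card {T. T \<subseteq> {..<n} \<and> card T = k \<and> S \<subseteq> T} = (n - card S) choose (k - card S)"
proof -
  have fS: "finite S" using assms(1) finite_subset by blast
  have eq: "{T. T \<subseteq> {..<n} \<and> card T = k \<and> S \<subseteq> T} = (\<lambda>U. U \<union> S) ` {U. U \<subseteq> {..<n} - S \<and> card U = k - card S}"
  proof (intro equalityI subsetI)
    fix T assume "T \<in> {T. T \<subseteq> {..<n} \<and> card T = k \<and> S \<subseteq> T}"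
    then have T: "T \<subseteq> {..<n}" "card T = k" "S \<subseteq> T" by auto
    have "finite T" using T(1) finite_subset by blast
    then have "card (T - S) = k - card S" using T by (simp add: card_Diff_subset fS)
    moreover have "T = (T - S) \<union> S" using T by auto
    ultimately show "T \<in> (\<lambda>U. U \<union> S) ` {U. U \<subseteq> {..<n} - S \<and> card U = k - card S}"
      using T by blast
  next
    fix T assume "T \<in> (\<lambda>U. U \<union> S) ` {U. U \<subseteq> {..<n} - S \<and> card U = k - card S}"
    then obtain U where U: "U \<subseteq> {..<n} - S" "card U = k - card S" "T = U \<union> S" by auto
    have "finite U" using U(1) finite_subset by blast
    have "U \<inter> S = {}" using U(1) by auto
    then have "card T = k" using U assms(2) fS \<open>finite U\<close> by (simp add: card_Un_disjoint)
    then show "T \<in> {T. T \<subseteq> {..<n} \<and> card T = k \<and> S \<subseteq> T}" using U assms(1) by auto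
  qed
  have inj: "inj_on (\<lambda>U. U \<union> S) {U. U \<subseteq> {..<n} - S \<and> card U = k - card S}"
    by (rule inj_onI) blast
  have "card {T. T \<subseteq> {..<n} \<and> card T = k \<and> S \<subseteq> T} = card {U. U \<subseteq> {..<n} - S \<and> card U = k - card S}"
    unfolding eq by (rule card_image[OF inj])
  also have "\<dots> = card ({..<n} - S) choose (k - card S)" by (rule n_subsets) simp
  also have "card ({..<n} - S) = n - card S" using assms(1) fS by (simp add: card_Diff_subset)
  finally show ?thesis .
qed

lemma count_super2:
  assumes "S \<subseteq> {..<n}" "k \<le> n"
  shows "card {T. T \<subseteq> {..<n} \<and> card T = k \<and> S \<subseteq> T} * (n choose card S) = (n choose k) * (k choose card S)"
proof (cases "card S \<le> k")
  case True
  then show ?thesis using count_super[OF assms(1) True] choose_mult[OF True assms(2)] by simp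
next
  case False
  have e: "{T. T \<subseteq> {..<n} \<and> card T = k \<and> S \<subseteq> T} = {}"
  proof (safe)
    fix T assume "T \<subseteq> {..<n}" "S \<subseteq> T" "k = card T"
    then have "card S \<le> card T" by (meson card_mono finite_lessThan finite_subset)
    then show "T \<in> {}" using False \<open>k = card T\<close> by simp
  qed
  show ?thesis unfolding e using False by simp
qed

lemma mono_eval:
  assumes "T \<subseteq> {..<n}"
  shows "(\<Prod>i<n. cube_pt (ptT T n) i ^ e i) = (if {i. i < n \<and> 0 < e i} \<subseteq> T then 1 else (0::real))"
proof (cases "{i. i < n \<and> 0 < e i} \<subseteq> T")
  case True
  have "cube_pt (ptT T n) i ^ e i = 1" if "i < n" for i
    using True that by (cases "e i = 0") (auto simp: cube_pt_def)
  then show ?thesis using True by simp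
next
  case False
  then obtain i where "i < n" "0 < e i" "i \<notin> T" by auto
  then have "cube_pt (ptT T n) i ^ e i = 0" by (simp add: cube_pt_def)
  then show ?thesis using False \<open>i < n\<close> by (auto intro: prod_zero)
qed

definition Qs :: "nat \<Rightarrow> real poly" where
  "Qs s = smult (1 / fact s) (\<Prod>j<s. [:- of_nat j, 1:])"

lemma Qs_eval: "poly (Qs s) (real k) = real (k choose s)"
  by (simp add: Qs_def poly_prod binomial_gbinomial gbinomial_prod_rev atLeast0LessThan)

lemma Qs_deg: "degree (Qs s) \<le> s"
proof -
  have "degree (\<Prod>j<s. [:- of_nat j, 1::real:]) \<le> (\<Sum>j<s. degree [:- of_nat j, 1::real:])"
    using degree_prod_sum_le[of "{..<s}" "\<lambda>j. [:- of_nat j, 1::real:]"] by (simp add: o_def)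
  then show ?thesis unfolding Qs_def by (simp add: degree_smult_le order_trans)
qed


lemma symmetrize:
  assumes pd: "poly_deg_le n D q"
  shows "\<exists>R :: real poly. degree R \<le> D \<and> (\<forall>k\<le>n.
     real (n choose k) * poly R (real k) = (\<Sum>T\<in>{T. T \<subseteq> {..<n} \<and> card T = k}. q (cube_pt (ptT T n))))"
proof -
  obtain M c where M: "finite M" "\<forall>e\<in>M. (\<Sum>i<n. e i) \<le> D"
    "\<forall>y. q y = (\<Sum>e\<in>M. c e * (\<Prod>i<n. y i ^ e i))"
    using pd unfolding poly_deg_le_def by blast
  define S where "S e = {i. i < n \<and> 0 < e i}" for e :: "nat \<Rightarrow> nat"
  have Ssub: "S e \<subseteq> {..<n}" for e unfolding S_def by auto
  have Scard: "card (S e) \<le> n" for e using Ssub[of e] by (metis card_lessThan card_mono finite_lessThan)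
  define R where "R = (\<Sum>e\<in>M. smult (c e / real (n choose card (S e))) (Qs (card (S e))))"
  have "degree R \<le> D" unfolding R_def
  proof (rule degree_sum_le[OF M(1)])
    fix e assume "e \<in> M"
    have "card (S e) = (\<Sum>i\<in>S e. 1)" by simp
    also have "\<dots> \<le> (\<Sum>i\<in>S e. e i)" by (rule sum_mono) (auto simp: S_def)
    also have "\<dots> \<le> (\<Sum>i<n. e i)" by (rule sum_mono2) (auto simp: S_def)
    also have "\<dots> \<le> D" using M(2) \<open>e \<in> M\<close> by auto
    finally show "degree (smult (c e / real (n choose card (S e))) (Qs (card (S e)))) \<le> D"
      using Qs_deg[of "card (S e)"] degree_smult_le by (meson order_trans)
  qed
  moreover have "real (n choose k) * poly R (real k) = (\<Sum>T\<in>{T. T \<subseteq> {..<n} \<and> card T = k}. q (cube_pt (ptT T n)))"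
    if "k \<le> n" for k
  proof -
    let ?Tk = "{T. T \<subseteq> {..<n} \<and> card T = k}"
    have fTk: "finite ?Tk" by (rule finite_subset[of _ "Pow {..<n}"]) auto
    have cnt: "(\<Sum>T\<in>?Tk. (\<Prod>i<n. cube_pt (ptT T n) i ^ e i)) = real (card {T. T \<subseteq> {..<n} \<and> card T = k \<and> S e \<subseteq> T})" for e
    proof -
      have "(\<Sum>T\<in>?Tk. (\<Prod>i<n. cube_pt (ptT T n) i ^ e i)) = (\<Sum>T\<in>?Tk. if S e \<subseteq> T then 1 else 0)"
        by (rule sum.cong) (auto simp: mono_eval S_def)
      also have "\<dots> = (\<Sum>T\<in>{T \<in> ?Tk. S e \<subseteq> T}. 1)"
        by (rule sum.inter_filter[symmetric, OF fTk])
      also have "\<dots> = real (card {T. T \<subseteq> {..<n} \<and> card T = k \<and> S e \<subseteq> T})"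
        by (simp add: conj_assoc)
      finally show ?thesis .
    qed
    have cnt2: "real (card {T. T \<subseteq> {..<n} \<and> card T = k \<and> S e \<subseteq> T}) =
       real (n choose k) * (real (k choose card (S e)) / real (n choose card (S e)))" for e
    proof -
      have pos: "real (n choose card (S e)) > 0" using Scard[of e] by simp
      have "real (card {T. T \<subseteq> {..<n} \<and> card T = k \<and> S e \<subseteq> T}) * real (n choose card (S e)) =
          real (n choose k) * real (k choose card (S e))"
        using count_super2[OF Ssub that, of e] by (metis of_nat_mult)
      then show ?thesis using pos by (simp add: field_simps)
    qed
    have "(\<Sum>T\<in>?Tk. q (cube_pt (ptT T n))) = (\<Sum>T\<in>?Tk. \<Sum>e\<in>M. c e * (\<Prod>i<n. cube_pt (ptT T n) i ^ e i))"
      using M(3) by simp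
    also have "\<dots> = (\<Sum>e\<in>M. c e * (\<Sum>T\<in>?Tk. (\<Prod>i<n. cube_pt (ptT T n) i ^ e i)))"
      by (simp add: sum.swap[of _ ?Tk] sum_distrib_left)
    also have "\<dots> = (\<Sum>e\<in>M. c e * (real (n choose k) * (real (k choose card (S e)) / real (n choose card (S e)))))"
      by (simp add: cnt cnt2)
    also have "\<dots> = real (n choose k) * poly R (real k)"
      unfolding R_def by (simp add: poly_sum Qs_eval sum_distrib_left algebra_simps)
    finally show ?thesis by simp
  qed
  ultimately show ?thesis by blast
qed


lemma lower:
  assumes sym: "symmetric_fun n f" and pd: "poly_deg_le n d p"
    and pr: "\<forall>x. length x = n \<longrightarrow>
         (\<not> f x \<longrightarrow> \<bar>p (cube_pt x)\<bar> \<le> 1/3) \<and> (f x \<longrightarrow> \<bar>p (cube_pt x)\<bar> \<ge> 1)"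
  shows "alt n f \<le> 2 * d"
proof -
  define F where "F k = f (ptT {..<k} n)" for k
  define A where "A = {k. k < n \<and> F k \<noteq> F (Suc k)}"
  have altA: "alt n f = card A" unfolding A_def F_def by (rule alt_eq[OF sym])
  have "poly_deg_le n (d + d) (\<lambda>y. p y * p y)" by (rule pdl_mult[OF pd pd])
  then obtain R :: "real poly" where R: "degree R \<le> d + d" "\<And>k. k \<le> n \<Longrightarrow>
     real (n choose k) * poly R (real k) = (\<Sum>T\<in>{T. T \<subseteq> {..<n} \<and> card T = k}. p (cube_pt (ptT T n)) * p (cube_pt (ptT T n)))"
    using symmetrize by blast
  have Rb: "(\<not> F k \<longrightarrow> poly R (real k) \<le> 1/9) \<and> (F k \<longrightarrow> poly R (real k) \<ge> 1)" if "k \<le> n" for k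
  proof -
    let ?Tk = "{T. T \<subseteq> {..<n} \<and> card T = k}"
    have cTk: "card ?Tk = n choose k" using n_subsets[of "{..<n}" k] by simp
    have pos: "real (n choose k) > 0" using that by simp
    have fT: "f (ptT T n) = F k" if "T \<in> ?Tk" for T
      using sym_F[OF sym, of "ptT T n"] that ptT_count[of T n] unfolding F_def by auto
    have sq1: "a * a \<le> 1/9" if "\<bar>a\<bar> \<le> 1/3" for a :: real
    proof -
      have "\<bar>a\<bar> * \<bar>a\<bar> \<le> 1/3 * (1/3)" using that by (intro mult_mono) auto
      then show ?thesis by (simp add: abs_mult[symmetric])
    qed
    have sq2: "a * a \<ge> 1" if "\<bar>a\<bar> \<ge> 1" for a :: real
    proof -
      have "1 * 1 \<le> \<bar>a\<bar> * \<bar>a\<bar>" using that by (intro mult_mono) auto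
      then show ?thesis by (simp add: abs_mult[symmetric])
    qed
    show ?thesis
    proof (intro conjI impI)
      assume "\<not> F k"
      have "(\<Sum>T\<in>?Tk. p (cube_pt (ptT T n)) * p (cube_pt (ptT T n))) \<le> (\<Sum>T\<in>?Tk. 1/9)"
        by (rule sum_mono) (use pr fT \<open>\<not> F k\<close> sq1 in auto)
      then have "real (n choose k) * poly R (real k) \<le> real (n choose k) * (1/9)"
        using R(2)[OF that] cTk by simp
      then show "poly R (real k) \<le> 1/9" using pos by simp
    next
      assume "F k"
      have "(\<Sum>T\<in>?Tk. 1) \<le> (\<Sum>T\<in>?Tk. p (cube_pt (ptT T n)) * p (cube_pt (ptT T n)))"
        by (rule sum_mono) (use pr fT \<open>F k\<close> sq2 in auto)
      then have "real (n choose k) * 1 \<le> real (n choose k) * poly R (real k)"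
        using R(2)[OF that] cTk by simp
      then show "poly R (real k) \<ge> 1" using pos by simp
    qed
  qed
  show ?thesis
  proof (cases "A = {}")
    case True then show ?thesis using altA by simp
  next
    case False
    define g where "g = R - [:1/2:]"
    have pg: "poly g x = poly R x - 1/2" for x by (simp add: g_def)
    have ex: "\<exists>x. real k < x \<and> x < real k + 1 \<and> poly g x = 0" if "k \<in> A" for k
    proof -
      have k: "k \<le> n" "Suc k \<le> n" "F k \<noteq> F (Suc k)" using that unfolding A_def by auto
      have "poly g (real k) * poly g (real (Suc k)) < 0"
      proof (cases "F k")
        case True
        then have "poly g (real k) > 0" "poly g (real (Suc k)) < 0" using Rb[OF k(1)] Rb[OF k(2)] k(3) pg by auto
        then show ?thesis by (simp add: mult_pos_neg)
      next
        case False
        then have "poly g (real k) < 0" "poly g (real (Suc k)) > 0" using Rb[OF k(1)] Rb[OF k(2)] k(3) pg by auto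
        then show ?thesis by (simp add: mult_neg_pos)
      qed
      then show ?thesis using poly_IVT[of "real k" "real (Suc k)" g] by auto
    qed
    then obtain rt where rt: "\<And>k. k \<in> A \<Longrightarrow> real k < rt k \<and> rt k < real k + 1 \<and> poly g (rt k) = 0"
      by metis
    have inj: "inj_on rt A"
    proof (rule inj_onI)
      fix a b assume ab: "a \<in> A" "b \<in> A" "rt a = rt b"
      show "a = b"
      proof (rule ccontr)
        assume "a \<noteq> b"
        then consider "a < b" | "b < a" by linarith
        then show False
        proof cases
          case 1 then have "real a + 1 \<le> real b" by simp
          then show False using rt[OF ab(1)] rt[OF ab(2)] ab(3) by linarith
        next
          case 2 then have "real b + 1 \<le> real a" by simp
          then show False using rt[OF ab(1)] rt[OF ab(2)] ab(3) by linarith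
        qed
      qed
    qed
    obtain k0 where "k0 \<in> A" using False by blast
    then have "poly g (real k0) \<noteq> 0" using Rb[of k0] pg unfolding A_def by force
    then have g0: "g \<noteq> 0" by auto
    have "card A = card (rt ` A)" using inj by (simp add: card_image)
    also have "\<dots> \<le> card {x. poly g x = 0}"
      by (rule card_mono[OF poly_roots_finite[OF g0]]) (use rt in auto)
    also have "\<dots> \<le> degree g" by (rule card_poly_roots_bound[OF g0])
    also have "\<dots> \<le> d + d" unfolding g_def using R(1) by (intro degree_diff_le) auto
    finally show ?thesis using altA by simp
  qed
qed

theorem lemma3p15:
  fixes n :: nat and f :: "bool list \<Rightarrow> bool"
  assumes "symmetric_fun n f"
  shows "real (N_deg n f) \<ge> real (alt n f) / 2"
proof -
  let ?Q = "\<lambda>d. \<exists>p. poly_deg_le n d p \<and>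
      (\<forall>x. length x = n \<longrightarrow>
         (\<not> f x \<longrightarrow> \<bar>p (cube_pt x)\<bar> \<le> 1/3) \<and> (f x \<longrightarrow> \<bar>p (cube_pt x)\<bar> \<ge> 1))"
  obtain p where p: "poly_deg_le n n p" "\<forall>x. length x = n \<longrightarrow> p (cube_pt x) = (if f x then 1 else 0)"
    using exists_poly by blast
  have "?Q n" using p by (intro exI[of _ p]) auto
  then have "?Q (N_deg n f)" unfolding N_deg_def by (rule LeastI)
  then have "alt n f \<le> 2 * N_deg n f" using lower[OF assms] by blast
  then show ?thesis by simp
qed

end
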